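(* Let $C$ be a compact convex polyhedron in $\mathbb R^n$ and $W$ a linear subspace of $\mathbb R^n$, and set $\operatorname{dep}(C,W)=\{x\in C : (x+W)\cap C^{\circ}\neq\emptyset\}$, where $C^\circ$ is the relative interior of $C$. If $D$ is a face of $C$, then $D\cap\operatorname{dep}(C,W)$ is either empty or contains the relative interior $D^\circ$ of $D$. *)

theory Defs
  imports "HOL-Analysis.Analysis"
begin

definition dep :: "'a::euclidean_space set \<Rightarrow> 'a set \<Rightarrow> 'a set" where
  "dep C W = {x \<in> C. ((\<lambda>w. x + w) ` W) \<inter> rel_interior C \<noteq> {}}"

end

theory Submission
  imports Defs
begin

theorem mainTheorem5:
  fixes C D W :: "'a::euclidean_space set"
  assumes "polyhedron C" and "compact C" and "convex C"
    and "subspace W"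
    and "D face_of C"
  shows "D \<inter> dep C W = {} \<or> rel_interior D \<subseteq> D \<inter> dep C W"
proof (cases "D \<inter> dep C W = {}")
  case True then show ?thesis by simp
next
  case False
  then obtain x w where xD: "x \<in> D" and wW: "w \<in> W" and xw: "x + w \<in> rel_interior C"
    unfolding dep_def by blast
  have DC: "D \<subseteq> C" and cD: "convex D" using assms(5) face_of_imp_subset face_of_imp_convex by auto
  have "rel_interior D \<subseteq> D \<inter> dep C W"
  proof
    fix y assume yD: "y \<in> rel_interior D"
    have yD': "y \<in> D" using yD rel_interior_subset by blast
    obtain e where e1: "e > 1" and zD: "(1 - e) *\<^sub>R x + e *\<^sub>R y \<in> D"
      using convex_rel_interior_iff[OF cD] yD xD by blast
    define z where "z = (1 - e) *\<^sub>R x + e *\<^sub>R y"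
    define t where "t = 1 - 1 / e"
    have t0: "0 < t" and t1: "t \<le> 1" using e1 by (auto simp: t_def)
    have zC: "z \<in> C" using zD DC z_def by auto
    have "z - t *\<^sub>R (z - (x + w)) \<in> rel_interior C"
      by (rule rel_interior_convex_shrink[OF assms(3) xw zC t0 t1])
    moreover have "z - t *\<^sub>R (z - (x + w)) = y + t *\<^sub>R w"
    proof -
      have "z - t *\<^sub>R (z - (x + w)) = (1 - t) *\<^sub>R z + t *\<^sub>R x + t *\<^sub>R w"
        by (simp add: algebra_simps)
      also have "(1 - t) *\<^sub>R z = (1/e) *\<^sub>R z" by (simp add: t_def)
      also have "(1/e) *\<^sub>R z = ((1 - e)/e) *\<^sub>R x + y"
        using e1 by (simp add: z_def scaleR_add_right)
      also have "((1 - e)/e) *\<^sub>R x + y + t *\<^sub>R x = y"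
      proof -
        have "(1 - e)/e + t = 0" using e1 by (simp add: t_def field_simps)
        hence "((1 - e)/e) *\<^sub>R x + t *\<^sub>R x = 0" by (metis scaleR_left_distrib scaleR_zero_left)
        thus ?thesis by (simp add: algebra_simps)
      qed
      finally show ?thesis .
    qed
    moreover have "t *\<^sub>R w \<in> W" using assms(4) wW by (rule subspace_scale)
    ultimately have "((\<lambda>v. y + v) ` W) \<inter> rel_interior C \<noteq> {}" by force
    thus "y \<in> D \<inter> dep C W" using yD' DC unfolding dep_def by auto
  qed
  then show ?thesis by simp
qed

end
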